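(* Let $I=\ker\big(S\otimes_{\mathbf C}S\to\mathbf C[\mathcal M_{\ge0}]\otimes_{\mathbf C}S\big)$ be as in the context. Then $I$ is generated as an ideal of $S\otimes_{\mathbf C}S$ by \[ \{\,x^D\otimes x^E - x^E\otimes x^D \;\mid\; D,E\in\tilde M_{\ge0},\ [D]=[E]\,\}, \] and, if for each chamber $\Gamma$ of the arrangement $\mathcal A$ a set $\Xi_\Gamma$ of generators of the semigroup $M\cap\Gamma$ is chosen, also by \[ \{\,x^{D^+(m)}\otimes x^{D^-(m)} - x^{D^-(m)}\otimes x^{D^+(m)} \;\mid\; m\in\textstyle\bigcup_\Gamma\Xi_\Gamma\,\}, \] the union being over all chambers $\Gamma$.
   Context: Let $M=\mathbf Z^r$, $N=\mathrm{Hom}_{\mathbf Z}(M,\mathbf Z)$ with pairing $\langle\ ,\ \rangle$, and let $\Sigma$ be a finite complete fan in $N_{\mathbf R}$ (defining a complete toric variety $X$ over $\mathbf C$). Let $\rho_1,\dots,\rho_l$ be the one-dimensional cones of $\Sigma$ and $n_j\in N$ the primitive generator of $\rho_j$. Let $\tilde M$ be the free $\mathbf Z$-module with basis $\tilde m_1,\dots,\tilde m_l$, let $\pi^*:M\to\tilde M$, $\pi^*(m)=\sum_j\langle m,n_j\rangle\tilde m_j$, let $\mathcal M=\mathrm{coker}(\pi^* )$ and $\mu_j\in\mathcal M$ the image of $\tilde m_j$. Let $\tilde M_{\ge0}=\sum_j\mathbf Z_{\ge0}\tilde m_j$ and $\mathcal M_{\ge0}=\sum_j\mathbf Z_{\ge0}\mu_j$.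 Let $S=\mathbf C[x_1,\dots,x_l]$, graded by $\deg x_j=\mu_j$. For $D=\sum_j a_j\tilde m_j\in\tilde M_{\ge0}$ put $x^D=\prod_j x_j^{a_j}$ and $[D]=\sum_j a_j\mu_j$. For $m\in M$ put $D^+(m)=\sum_{\langle m,n_j\rangle>0}\langle m,n_j\rangle\tilde m_j$ and $D^-(m)=\sum_{\langle m,n_j\rangle<0}(-\langle m,n_j\rangle)\tilde m_j$. The $\mathbf C$-algebra homomorphism $S\otimes_{\mathbf C}S\to\mathbf C[\mathcal M_{\ge0}]\otimes_{\mathbf C}S$ is defined by $x^D\otimes x^E\mapsto\mathbf e([D])\otimes x^{D+E}$, where $\mathbf e(\alpha)$ denotes the basis element of the semigroup algebra $\mathbf C[\mathcal M_{\ge0}]$ corresponding to $\alpha$. Let $\mathcal A$ be the arrangement of hyperplanes $\{m\in\mathbf R^r:\langle m,n_j\rangle=0\}$, $j=1,\dots,l$; a chamber is a closed top-dimensional polyhedral cone of the partition of $\mathbf R^r$ induced by $\mathcal A$. *)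

theory Defs
  imports "HOL-Analysis.Analysis" "HOL-Library.Poly_Mapping" "HOL-Library.Product_Plus"
begin

text \<open>Lattices: M = N = int^'r (dual bases), the pairing is the standard dot product.\<close>

definition pairing :: "int^'r \<Rightarrow> int^'r \<Rightarrow> int" where
  "pairing m v = (\<Sum>i\<in>UNIV. m $ i * v $ i)"

definition rvec :: "int^'r \<Rightarrow> real^'r" where
  "rvec v = (\<chi> i. real_of_int (v $ i))"

definition rat_poly_cone :: "(real^'r) set \<Rightarrow> bool" where
  "rat_poly_cone \<sigma> \<longleftrightarrow> (\<exists>S :: (int^'r) set. finite S \<and> \<sigma> = convex_cone hull (insert 0 (rvec ` S)))"

definition strongly_convex :: "(real^'r) set \<Rightarrow> bool" where
  "strongly_convex \<sigma> \<longleftrightarrow> \<sigma> \<inter> uminus ` \<sigma> \<subseteq> {0}"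

definition is_fan :: "(real^'r) set set \<Rightarrow> bool" where
  "is_fan \<Sigma> \<longleftrightarrow> finite \<Sigma> \<and>
     (\<forall>\<sigma>\<in>\<Sigma>. rat_poly_cone \<sigma> \<and> strongly_convex \<sigma> \<and> (\<forall>\<tau>. \<tau> face_of \<sigma> \<and> \<tau> \<noteq> {} \<longrightarrow> \<tau> \<in> \<Sigma>)) \<and>
     (\<forall>\<sigma>\<in>\<Sigma>. \<forall>\<tau>\<in>\<Sigma>. (\<sigma> \<inter> \<tau>) face_of \<sigma> \<and> (\<sigma> \<inter> \<tau>) face_of \<tau>)"

definition complete_fan :: "(real^'r) set set \<Rightarrow> bool" where
  "complete_fan \<Sigma> \<longleftrightarrow> is_fan \<Sigma> \<and> \<Union>\<Sigma> = UNIV"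

definition rays :: "(real^'r) set set \<Rightarrow> (real^'r) set set" where
  "rays \<Sigma> = {\<sigma>\<in>\<Sigma>. aff_dim \<sigma> = 1}"

definition ray_of :: "int^'r \<Rightarrow> (real^'r) set" where
  "ray_of v = {c *\<^sub>R rvec v | c. c \<ge> 0}"

definition primitive :: "int^'r \<Rightarrow> bool" where
  "primitive v \<longleftrightarrow> v \<noteq> 0 \<and> (\<forall>(k::int) (w::int^'r). v = k *s w \<longrightarrow> \<bar>k\<bar> = 1)"

text \<open>The rays of \<Sigma> are indexed by the finite type 'j, with primitive generators n j.\<close>

definition ray_generators :: "(real^'r) set set \<Rightarrow> ('j::finite \<Rightarrow> int^'r) \<Rightarrow> bool" where
  "ray_generators \<Sigma> n \<longleftrightarrow> inj n \<and> (\<forall>j. primitive (n j)) \<and> rays \<Sigma> = range (\<lambda>j. ray_of (n j))"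

definition chamber :: "('j::finite \<Rightarrow> int^'r) \<Rightarrow> (real^'r) set \<Rightarrow> bool" where
  "chamber n \<Gamma> \<longleftrightarrow> (\<exists>C \<in> components (UNIV - (\<Union>j. {x. x \<bullet> rvec (n j) = 0})). \<Gamma> = closure C)"

definition semigroup_generators :: "(int^'r) set \<Rightarrow> (real^'r) set \<Rightarrow> bool" where
  "semigroup_generators \<Xi> \<Gamma> \<longleftrightarrow> \<Xi> \<subseteq> {m. rvec m \<in> \<Gamma>} \<and>
     (\<forall>m. rvec m \<in> \<Gamma> \<longrightarrow> (\<exists>F c. finite F \<and> F \<subseteq> \<Xi> \<and> m = (\<Sum>\<xi>\<in>F. int (c \<xi>) *s \<xi>)))"

text \<open>S \<otimes> S is the monoid algebra of N^l \<times> N^l; the monomial x^D \<otimes> x^E is the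
  basis element indexed by (D,E).\<close>

type_synonym 'j SS = "(('j \<Rightarrow>\<^sub>0 nat) \<times> ('j \<Rightarrow>\<^sub>0 nat)) \<Rightarrow>\<^sub>0 complex"

definition mono2 :: "('j \<Rightarrow>\<^sub>0 nat) \<Rightarrow> ('j \<Rightarrow>\<^sub>0 nat) \<Rightarrow> 'j SS" where
  "mono2 D E = Poly_Mapping.single (D, E) 1"

text \<open>The class [D] in the cokernel \<M> of \<pi>^*, represented as the coset D + im \<pi>^*.\<close>

definition deg_class :: "('j::finite \<Rightarrow> int^'r) \<Rightarrow> ('j \<Rightarrow>\<^sub>0 nat) \<Rightarrow> ('j \<Rightarrow> int) set" where
  "deg_class n D = {v. \<exists>m::int^'r. \<forall>j. v j - int (Poly_Mapping.lookup D j) = pairing m (n j)}"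

text \<open>The homomorphism S\<otimes>S \<rightarrow> C[\<M>_\<ge>0] \<otimes> S, x^D\<otimes>x^E \<mapsto> e([D]) \<otimes> x^(D+E),
  extended linearly; the target is the monoid algebra with basis pairs ([D], F).\<close>

definition phi :: "('j::finite \<Rightarrow> int^'r) \<Rightarrow> 'j SS \<Rightarrow> ((('j \<Rightarrow> int) set) \<times> ('j \<Rightarrow>\<^sub>0 nat)) \<Rightarrow>\<^sub>0 complex" where
  "phi n f = (\<Sum>k\<in>Poly_Mapping.keys f. Poly_Mapping.single (deg_class n (fst k), fst k + snd k) (Poly_Mapping.lookup f k))"

definition ideal_generated :: "'a::comm_ring_1 set \<Rightarrow> 'a set" where
  "ideal_generated G = {x. \<exists>F c. finite F \<and> F \<subseteq> G \<and> x = (\<Sum>g\<in>F. c g * g)}"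

definition Dplus :: "('j::finite \<Rightarrow> int^'r) \<Rightarrow> int^'r \<Rightarrow> ('j \<Rightarrow>\<^sub>0 nat)" where
  "Dplus n m = Abs_poly_mapping (\<lambda>j. nat (pairing m (n j)))"

definition Dminus :: "('j::finite \<Rightarrow> int^'r) \<Rightarrow> int^'r \<Rightarrow> ('j \<Rightarrow>\<^sub>0 nat)" where
  "Dminus n m = Abs_poly_mapping (\<lambda>j. nat (- pairing m (n j)))"

end

theory Submission
  imports Defs
begin



lemma lkA: "Poly_Mapping.lookup (Abs_poly_mapping (f :: 'j::finite \<Rightarrow> 'b::zero)) = f"
  by simp

lemma ig_0: "0 \<in> ideal_generated G"
  unfolding ideal_generated_def by (rule CollectI, rule exI[of _ "{}"]) auto

lemma ig_gen: "g \<in> G \<Longrightarrow> g \<in> ideal_generated G"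
  unfolding ideal_generated_def by (rule CollectI, rule exI[of _ "{g}"], rule exI[of _ "\<lambda>_. 1"]) auto

lemma ig_add:
  assumes "a \<in> ideal_generated G" "b \<in> ideal_generated G"
  shows "a + b \<in> ideal_generated G"
proof -
  obtain F1 c1 where 1: "finite F1" "F1 \<subseteq> G" "a = (\<Sum>g\<in>F1. c1 g * g)" using assms(1) unfolding ideal_generated_def by auto
  obtain F2 c2 where 2: "finite F2" "F2 \<subseteq> G" "b = (\<Sum>g\<in>F2. c2 g * g)" using assms(2) unfolding ideal_generated_def by auto
  define d1 where "d1 g = (if g \<in> F1 then c1 g else 0)" for g
  define d2 where "d2 g = (if g \<in> F2 then c2 g else 0)" for g
  have e1: "(\<Sum>g\<in>F1 \<union> F2. d1 g * g) = a"
    unfolding 1(3) by (rule sum.mono_neutral_cong_right) (use 1 2 in \<open>auto simp: d1_def\<close>)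
  have e2: "(\<Sum>g\<in>F1 \<union> F2. d2 g * g) = b"
    unfolding 2(3) by (rule sum.mono_neutral_cong_right) (use 1 2 in \<open>auto simp: d2_def\<close>)
  have "a + b = (\<Sum>g\<in>F1 \<union> F2. (d1 g + d2 g) * g)"
    unfolding e1[symmetric] e2[symmetric] distrib_right sum.distrib ..
  thus ?thesis unfolding ideal_generated_def using 1 2
    by (intro CollectI exI[of _ "F1 \<union> F2"] exI[of _ "\<lambda>g. d1 g + d2 g"]) auto
qed

lemma ig_mul:
  assumes "a \<in> ideal_generated G"
  shows "c * a \<in> ideal_generated G"
proof -
  obtain F1 c1 where 1: "finite F1" "F1 \<subseteq> G" "a = (\<Sum>g\<in>F1. c1 g * g)" using assms(1) unfolding ideal_generated_def by auto
  have "c * a = (\<Sum>g\<in>F1. (c * c1 g) * g)" unfolding 1(3) sum_distrib_left mult.assoc ..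
  thus ?thesis unfolding ideal_generated_def using 1 
    by (intro CollectI exI[of _ F1] exI[of _ "\<lambda>g. c * c1 g"]) simp
qed

lemma ig_neg: "a \<in> ideal_generated G \<Longrightarrow> - a \<in> ideal_generated G"
  using ig_mul[of a G "-1"] by simp

lemma ig_diff: "a \<in> ideal_generated G \<Longrightarrow> b \<in> ideal_generated G \<Longrightarrow> a - b \<in> ideal_generated G"
  using ig_add[of a G "-b"] ig_neg[of b G] by simp

lemma ig_sum: "finite S \<Longrightarrow> (\<And>x. x \<in> S \<Longrightarrow> f x \<in> ideal_generated G) \<Longrightarrow> sum f S \<in> ideal_generated G"
  by (induction S rule: finite_induct) (auto intro: ig_0 ig_add)

lemma ig_sub:
  assumes "G \<subseteq> ideal_generated H" "a \<in> ideal_generated G"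
  shows "a \<in> ideal_generated H"
proof -
  obtain F1 c1 where 1: "finite F1" "F1 \<subseteq> G" "a = (\<Sum>g\<in>F1. c1 g * g)" using assms(2) unfolding ideal_generated_def by auto
  show ?thesis unfolding 1(3) using 1 assms(1) by (intro ig_sum ig_mul) auto
qed

lemma mono2_mult: "mono2 a b * mono2 c d = mono2 (a + c) (b + d)"
  unfolding mono2_def by (simp add: mult_single)

definition gg where "gg a b = mono2 a b - mono2 b a"

lemma ab_tele: "(x::'a::ab_group_add) - y + (y - z) = x - z" by simp

lemma gg_add: "gg (a + a') (b + b') = mono2 a' b' * gg a b + mono2 b a * gg a' b'"
proof -
  have e: "a' + a = a + a'" "b' + b = b + b'" "a' + b = b + a'" "b' + a = a + b'"
    by (simp_all add: add.commute)
  have "mono2 a' b' * gg a b + mono2 b a * gg a' b' =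
     (mono2 (a + a') (b + b') - mono2 (b + a') (a + b')) + (mono2 (b + a') (a + b') - mono2 (b + b') (a + a'))"
    by (simp only: gg_def right_diff_distrib mono2_mult e)
  also have "\<dots> = gg (a + a') (b + b')" unfolding ab_tele gg_def ..
  finally show ?thesis ..
qed

lemma gg_00: "gg 0 0 = 0" unfolding gg_def by simp

lemma gg_add_ig: "gg a b \<in> ideal_generated G \<Longrightarrow> gg a' b' \<in> ideal_generated G \<Longrightarrow> gg (a + a') (b + b') \<in> ideal_generated G"
  unfolding gg_add by (intro ig_add ig_mul)

lemma gg_scal:
  fixes P Q :: "'j::finite \<Rightarrow>\<^sub>0 nat"
  assumes "gg P Q \<in> ideal_generated G"
  shows "(\<forall>j. Poly_Mapping.lookup A j = k * Poly_Mapping.lookup P j) \<Longrightarrow> (\<forall>j. Poly_Mapping.lookup B j = k * Poly_Mapping.lookup Q j) \<Longrightarrow> gg A B \<in> ideal_generated G"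
proof (induction k arbitrary: A B)
  case 0
  then have "A = 0" "B = 0" by (auto intro: poly_mapping_eqI)
  then show ?case by (simp add: gg_00 ig_0)
next
  case (Suc k)
  define A' where "A' = Abs_poly_mapping (\<lambda>j. k * Poly_Mapping.lookup P j)"
  define B' where "B' = Abs_poly_mapping (\<lambda>j. k * Poly_Mapping.lookup Q j)"
  have "gg A' B' \<in> ideal_generated G" using Suc.IH unfolding A'_def B'_def by simp
  moreover have "A = A' + P" "B = B' + Q" using Suc.prems unfolding A'_def B'_def
    by (auto intro!: poly_mapping_eqI simp: Poly_Mapping.lookup_add)
  ultimately show ?case using gg_add_ig assms by simp
qed

lemma gg_sum:
  fixes P Q :: "'x \<Rightarrow> ('j::finite \<Rightarrow>\<^sub>0 nat)"
  assumes "finite F" "\<And>x. x \<in> F \<Longrightarrow> gg (P x) (Q x) \<in> ideal_generated G"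
  shows "(\<forall>j. Poly_Mapping.lookup A j = (\<Sum>x\<in>F. c x * Poly_Mapping.lookup (P x) j)) \<Longrightarrow> (\<forall>j. Poly_Mapping.lookup B j = (\<Sum>x\<in>F. c x * Poly_Mapping.lookup (Q x) j)) \<Longrightarrow> gg A B \<in> ideal_generated G"
  using assms
proof (induction F arbitrary: A B rule: finite_induct)
  case empty
  then have "A = 0" "B = 0" by (auto intro: poly_mapping_eqI)
  then show ?case by (simp add: gg_00 ig_0)
next
  case (insert x F)
  define A' where "A' = Abs_poly_mapping (\<lambda>j. (\<Sum>x\<in>F. c x * Poly_Mapping.lookup (P x) j))"
  define B' where "B' = Abs_poly_mapping (\<lambda>j. (\<Sum>x\<in>F. c x * Poly_Mapping.lookup (Q x) j))"
  define A2 where "A2 = Abs_poly_mapping (\<lambda>j. c x * Poly_Mapping.lookup (P x) j)"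
  define B2 where "B2 = Abs_poly_mapping (\<lambda>j. c x * Poly_Mapping.lookup (Q x) j)"
  have "gg A' B' \<in> ideal_generated G" using insert unfolding A'_def B'_def by simp
  moreover have "gg A2 B2 \<in> ideal_generated G" unfolding A2_def B2_def
    by (rule gg_scal[OF insert.prems(3)[of x]]) auto
  moreover have "A = A' + A2" "B = B' + B2" using insert unfolding A'_def B'_def A2_def B2_def
    by (auto intro!: poly_mapping_eqI simp: Poly_Mapping.lookup_add)
  ultimately show ?case using gg_add_ig by simp
qed




abbreviation (input) lk where "lk \<equiv> Poly_Mapping.lookup"

lemma pairing_add: "pairing (a + b) v = pairing a v + pairing b v"
  unfolding pairing_def by (simp add: distrib_right sum.distrib)

lemma pairing_uminus: "pairing (- a) v = - pairing a v"
  unfolding pairing_def by (simp add: sum_negf)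

lemma pairing_zero: "pairing 0 v = 0"
  unfolding pairing_def by simp

lemma deg_class_sub:
  assumes "\<forall>j. int (lk D j) - int (lk E j) = pairing m0 (n j)"
  shows "deg_class n D \<subseteq> deg_class n E"
proof
  fix v assume "v \<in> deg_class n D"
  then obtain m where m: "\<forall>j. v j - int (lk D j) = pairing m (n j)" unfolding deg_class_def by auto
  have "\<forall>j. v j - int (lk E j) = pairing (m + m0) (n j)"
    using m assms by (simp add: pairing_add algebra_simps)
  thus "v \<in> deg_class n E" unfolding deg_class_def by auto
qed

lemma deg_class_eq:
  "deg_class n D = deg_class n E \<longleftrightarrow> (\<exists>m. \<forall>j. int (lk D j) - int (lk E j) = pairing m (n j))"
proof
  assume h: "deg_class n D = deg_class n E"
  have "(\<lambda>j. int (lk D j)) \<in> deg_class n D" unfolding deg_class_def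
    by (auto intro!: exI[of _ 0] simp: pairing_zero)
  hence "(\<lambda>j. int (lk D j)) \<in> deg_class n E" using h by simp
  thus "\<exists>m. \<forall>j. int (lk D j) - int (lk E j) = pairing m (n j)" unfolding deg_class_def by simp
next
  assume "\<exists>m. \<forall>j. int (lk D j) - int (lk E j) = pairing m (n j)"
  then obtain m where m: "\<forall>j. int (lk D j) - int (lk E j) = pairing m (n j)" by auto
  have m': "\<forall>j. int (lk E j) - int (lk D j) = pairing (-m) (n j)"
    using m by (simp add: pairing_uminus) (metis minus_diff_eq)
  show "deg_class n D = deg_class n E"
    using deg_class_sub[OF m] deg_class_sub[OF m'] by auto
qed

definition kap where "kap n k = (deg_class n (fst k), fst k + snd k)"

lemma phi_lookup:
  assumes "finite S" "Poly_Mapping.keys f \<subseteq> S"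
  shows "lk (phi n f) t = (\<Sum>k\<in>S. if kap n k = t then lk f k else 0)"
proof -
  have "lk (phi n f) t = (\<Sum>k\<in>Poly_Mapping.keys f. if kap n k = t then lk f k else 0)"
    unfolding phi_def lookup_sum lookup_single when_def kap_def by (simp add: eq_commute)
  also have "\<dots> = (\<Sum>k\<in>S. if kap n k = t then lk f k else 0)"
    by (rule sum.mono_neutral_left) (use assms in \<open>auto simp: in_keys_iff\<close>)
  finally show ?thesis .
qed

lemma phi_add: "phi n (a + b) = phi n a + phi n b"
proof (rule poly_mapping_eqI)
  fix t
  let ?S = "Poly_Mapping.keys a \<union> Poly_Mapping.keys b \<union> Poly_Mapping.keys (a + b)"
  have f: "finite ?S" by simp
  have s: "Poly_Mapping.keys (a+b) \<subseteq> ?S" "Poly_Mapping.keys a \<subseteq> ?S" "Poly_Mapping.keys b \<subseteq> ?S" by auto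
  show "lk (phi n (a + b)) t = lk (phi n a + phi n b) t"
    unfolding lookup_add phi_lookup[OF f s(1)] phi_lookup[OF f s(2)] phi_lookup[OF f s(3)]
    by (auto simp: lookup_add sum.distrib[symmetric] intro!: sum.cong)
qed

lemma phi_minus: "phi n (- a) = - phi n a"
proof (rule poly_mapping_eqI)
  fix t
  let ?S = "Poly_Mapping.keys a"
  have f: "finite ?S" by simp
  have s: "Poly_Mapping.keys (-a) \<subseteq> ?S" "Poly_Mapping.keys a \<subseteq> ?S" by auto
  show "lk (phi n (- a)) t = lk (- phi n a) t"
    unfolding lookup_uminus phi_lookup[OF f s(1)] phi_lookup[OF f s(2)]
    by (auto simp: sum_negf[symmetric] intro!: sum.cong)
qed

lemma phi_diff: "phi n (a - b) = phi n a - phi n b"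
  using phi_add[of n a "-b"] phi_minus[of n b] by simp

lemma phi_zero: "phi n 0 = 0"
  unfolding phi_def by simp

lemma phi_single: "phi n (Poly_Mapping.single k v) = Poly_Mapping.single (kap n k) v"
proof (rule poly_mapping_eqI)
  fix t
  have f: "finite {k}" by simp
  have s: "Poly_Mapping.keys (Poly_Mapping.single k v) \<subseteq> {k}" by simp
  show "lk (phi n (Poly_Mapping.single k v)) t = lk (Poly_Mapping.single (kap n k) v) t"
    unfolding phi_lookup[OF f s] by (simp add: lookup_single when_def)
qed

lemma phi_sum: "finite S \<Longrightarrow> phi n (sum f S) = (\<Sum>x\<in>S. phi n (f x))"
  by (induction S rule: finite_induct) (simp_all add: phi_zero phi_add)

lemma pm_expand: "f = (\<Sum>k\<in>Poly_Mapping.keys f. Poly_Mapping.single k (lk f k))"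
proof (rule poly_mapping_eqI)
  fix k'
  show "lk f k' = lk (\<Sum>k\<in>Poly_Mapping.keys f. Poly_Mapping.single k (lk f k)) k'"
    unfolding lookup_sum lookup_single when_def
    by (simp add: in_keys_iff)
qed

lemma kap_shift:
  assumes "deg_class n D = deg_class n E"
  shows "kap n (k + (D, E)) = kap n (k + (E, D))"
proof -
  obtain m where m: "\<forall>j. int (lk D j) - int (lk E j) = pairing m (n j)" using assms deg_class_eq by blast
  have "\<forall>j. int (lk (fst k + D) j) - int (lk (fst k + E) j) = pairing m (n j)"
    using m by (simp add: lookup_add)
  hence "deg_class n (fst k + D) = deg_class n (fst k + E)" using deg_class_eq by blast
  moreover have "fst k + D + (snd k + E) = fst k + E + (snd k + D)" by (simp add: add_ac)
  ultimately show ?thesis unfolding kap_def by (cases k) simp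
qed

lemma phi_gen:
  assumes "deg_class n D = deg_class n E"
  shows "phi n (c * gg D E) = 0"
proof -
  have "c * gg D E = (\<Sum>k\<in>Poly_Mapping.keys c. Poly_Mapping.single k (lk c k) * gg D E)"
    by (subst pm_expand[of c]) (simp add: sum_distrib_right)
  also have "\<dots> = (\<Sum>k\<in>Poly_Mapping.keys c. Poly_Mapping.single (k + (D, E)) (lk c k) - Poly_Mapping.single (k + (E, D)) (lk c k))"
    unfolding gg_def mono2_def right_diff_distrib mult_single by simp
  finally have "phi n (c * gg D E) = (\<Sum>k\<in>Poly_Mapping.keys c. Poly_Mapping.single (kap n (k + (D, E))) (lk c k) - Poly_Mapping.single (kap n (k + (E, D))) (lk c k))"
    by (simp add: phi_sum phi_diff phi_single)
  also have "\<dots> = 0" by (simp add: kap_shift[OF assms])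
  finally show ?thesis .
qed

lemma ideal_in_ker:
  assumes "x \<in> ideal_generated {mono2 D E - mono2 E D | D E. deg_class n D = deg_class n E}"
  shows "phi n x = 0"
proof -
  obtain F c where F: "finite F" "F \<subseteq> {mono2 D E - mono2 E D | D E. deg_class n D = deg_class n E}"
    "x = (\<Sum>g\<in>F. c g * g)" using assms unfolding ideal_generated_def by auto
  have "phi n (c g * g) = 0" if gF: "g \<in> F" for g
  proof -
    obtain D E where "g = gg D E" "deg_class n D = deg_class n E" using F(2) gF unfolding gg_def by blast
    thus ?thesis using phi_gen by simp
  qed
  thus ?thesis unfolding F(3) phi_sum[OF F(1)] by simp
qed




abbreviation (input) "G1 n \<equiv> {mono2 D E - mono2 E D | D E. deg_class n D = deg_class n E}"

lemma nat_diff_aux: "int ((a::nat) - b) - int (b - a) = int a - int b" by arith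

lemma fibre_in:
  assumes "deg_class n D = deg_class n D'" "D + E = D' + E'"
  shows "mono2 D E - mono2 D' E' \<in> ideal_generated (G1 n)"
proof -
  define G where "G = Abs_poly_mapping (\<lambda>j. min (lk D j) (lk D' j))"
  define A where "A = Abs_poly_mapping (\<lambda>j. lk D j - lk D' j)"
  define A' where "A' = Abs_poly_mapping (\<lambda>j. lk D' j - lk D j)"
  define H where "H = Abs_poly_mapping (\<lambda>j. lk E j - (lk D' j - lk D j))"
  have sj: "lk D j + lk E j = lk D' j + lk E' j" for j
    using arg_cong[OF assms(2), of "\<lambda>p. lk p j"] by (simp add: lookup_add)
  have e1: "D = G + A" unfolding G_def A_def by (rule poly_mapping_eqI) (simp add: lookup_add)
  have e2: "D' = G + A'" unfolding G_def A'_def by (rule poly_mapping_eqI) (simp add: lookup_add)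
  have e3: "E = H + A'" unfolding H_def A'_def
  proof (rule poly_mapping_eqI)
    fix j
    have "lk D' j - lk D j \<le> lk E j" using sj[of j] by arith
    thus "lk E j = lk (Abs_poly_mapping (\<lambda>j. lk E j - (lk D' j - lk D j)) + Abs_poly_mapping (\<lambda>j. lk D' j - lk D j)) j"
      by (simp add: lookup_add)
  qed
  have e4: "E' = H + A" unfolding H_def A_def
  proof (rule poly_mapping_eqI)
    fix j
    have "lk D' j - lk D j \<le> lk E j" "lk E' j = lk D j + lk E j - lk D' j" using sj[of j] by arith+
    thus "lk E' j = lk (Abs_poly_mapping (\<lambda>j. lk E j - (lk D' j - lk D j)) + Abs_poly_mapping (\<lambda>j. lk D j - lk D' j)) j"
      by (simp add: lookup_add)
  qed
  obtain m where m: "\<forall>j. int (lk D j) - int (lk D' j) = pairing m (n j)" using assms(1) deg_class_eq by blast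
  have "\<forall>j. int (lk A j) - int (lk A' j) = pairing m (n j)"
    using m unfolding A_def A'_def by (simp add: nat_diff_aux)
  hence dc: "deg_class n A = deg_class n A'" using deg_class_eq by blast
  have "mono2 D E - mono2 D' E' = mono2 G H * gg A A'"
    unfolding gg_def right_diff_distrib mono2_mult e1 e2 e3 e4 ..
  moreover have "gg A A' \<in> G1 n" using dc unfolding gg_def by blast
  ultimately show ?thesis by (simp add: ig_mul ig_gen)
qed

lemma ker_in:
  assumes "phi n f = 0"
  shows "f \<in> ideal_generated (G1 n)"
proof -
  define K where "K = Poly_Mapping.keys f"
  define r where "r t = (SOME k. k \<in> K \<and> kap n k = t)" for t
  have rk: "r (kap n k) \<in> K \<and> kap n (r (kap n k)) = kap n k" if "k \<in> K" for k
    unfolding r_def by (rule someI[of _ k]) (use that in auto)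
  have fK: "finite K" unfolding K_def by simp
  have Z: "(\<Sum>k\<in>K. if kap n k = t then lk f k else 0) = 0" for t
    using phi_lookup[OF fK, of f n t] assms unfolding K_def by simp
  have f_eq: "f = (\<Sum>k\<in>K. Poly_Mapping.single k (lk f k) - Poly_Mapping.single (r (kap n k)) (lk f k))
        + (\<Sum>k\<in>K. Poly_Mapping.single (r (kap n k)) (lk f k))"
    unfolding sum_subtractf using pm_expand[of f] unfolding K_def by simp
  have second: "(\<Sum>k\<in>K. Poly_Mapping.single (r (kap n k)) (lk f k)) = 0"
  proof (rule poly_mapping_eqI)
    fix k'
    have "(\<Sum>k\<in>K. if r (kap n k) = k' then lk f k else 0) = 0"
    proof (cases "\<exists>k0\<in>K. r (kap n k0) = k'")
      case True
      then obtain k0 where k0: "k0 \<in> K" "r (kap n k0) = k'" by auto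
      have "(\<Sum>k\<in>K. if r (kap n k) = k' then lk f k else 0) = (\<Sum>k\<in>K. if kap n k = kap n k' then lk f k else 0)"
      proof (rule sum.cong)
        fix k assume kK: "k \<in> K"
        have "r (kap n k) = k' \<longleftrightarrow> kap n k = kap n k'"
          using rk[OF kK] rk[OF k0(1)] k0(2) by metis
        thus "(if r (kap n k) = k' then lk f k else 0) = (if kap n k = kap n k' then lk f k else 0)" by simp
      qed simp
      thus ?thesis using Z by simp
    qed (auto intro: sum.neutral)
    thus "lk (\<Sum>k\<in>K. Poly_Mapping.single (r (kap n k)) (lk f k)) k' = lk 0 k'"
      unfolding lookup_sum lookup_single when_def by simp
  qed
  have first: "(\<Sum>k\<in>K. Poly_Mapping.single k (lk f k) - Poly_Mapping.single (r (kap n k)) (lk f k)) \<in> ideal_generated (G1 n)"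
  proof (rule ig_sum[OF fK])
    fix k assume kK: "k \<in> K"
    obtain D E where k: "k = (D, E)" by (cases k)
    obtain D' E' where k': "r (kap n k) = (D', E')" by (cases "r (kap n k)")
    have "kap n (D', E') = kap n (D, E)" using rk[OF kK] k k' by simp
    hence "deg_class n D = deg_class n D'" "D + E = D' + E'" unfolding kap_def by auto
    hence "mono2 D E - mono2 D' E' \<in> ideal_generated (G1 n)" by (rule fibre_in)
    hence "Poly_Mapping.single 0 (lk f k) * (mono2 D E - mono2 D' E') \<in> ideal_generated (G1 n)" by (rule ig_mul)
    moreover have "Poly_Mapping.single 0 (lk f k) * (mono2 D E - mono2 D' E') = Poly_Mapping.single k (lk f k) - Poly_Mapping.single (r (kap n k)) (lk f k)"
      unfolding k' unfolding k mono2_def right_diff_distrib mult_single by simp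
    ultimately show "Poly_Mapping.single k (lk f k) - Poly_Mapping.single (r (kap n k)) (lk f k) \<in> ideal_generated (G1 n)" by simp
  qed
  show ?thesis using first second f_eq by simp
qed

lemma part1: "{f. phi n f = 0} = ideal_generated (G1 n)"
  using ker_in ideal_in_ker by blast




lemma rvec_inner: "rvec a \<bullet> rvec b = real_of_int (pairing a b)"
  unfolding inner_vec_def rvec_def pairing_def by simp

lemma rvec_nonzero: "v \<noteq> 0 \<Longrightarrow> rvec v \<noteq> 0"
  unfolding rvec_def by (auto simp: vec_eq_iff)

lemma sign_chamber:
  assumes "chamber n \<Gamma>"
  shows "\<exists>s. \<forall>j. s j \<noteq> 0 \<and> (\<forall>x\<in>\<Gamma>. 0 \<le> s j * (x \<bullet> rvec (n j)))"
proof -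
  let ?U = "UNIV - (\<Union>j. {x. x \<bullet> rvec (n j) = 0})"
  obtain C where C: "C \<in> components ?U" "\<Gamma> = closure C" using assms unfolding chamber_def by auto
  obtain c where c: "c \<in> C" using in_components_nonempty[OF C(1)] by auto
  have CU: "C \<subseteq> ?U" using in_components_subset[OF C(1)] .
  have conn: "connected C" using in_components_connected[OF C(1)] .
  define s where "s j = c \<bullet> rvec (n j)" for j
  have "s j \<noteq> 0 \<and> (\<forall>x\<in>\<Gamma>. 0 \<le> s j * (x \<bullet> rvec (n j)))" for j
  proof
    show "s j \<noteq> 0" using c CU unfolding s_def by auto
    have inC: "C \<subseteq> {x. 0 \<le> (s j *\<^sub>R rvec (n j)) \<bullet> x}"
    proof
      fix x assume x: "x \<in> C"
      have xn: "x \<bullet> rvec (n j) \<noteq> 0" using x CU by auto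
      show "x \<in> {x. 0 \<le> (s j *\<^sub>R rvec (n j)) \<bullet> x}"
      proof (rule ccontr)
        assume "x \<notin> {x. 0 \<le> (s j *\<^sub>R rvec (n j)) \<bullet> x}"
        hence neg: "s j * (x \<bullet> rvec (n j)) < 0" by (simp add: inner_commute)
        have "\<exists>z\<in>C. rvec (n j) \<bullet> z = 0"
        proof (cases "s j > 0")
          case True
          hence "x \<bullet> rvec (n j) < 0" using neg by (simp add: mult_less_0_iff)
          thus ?thesis using connected_ivt_hyperplane[OF conn x c, of "rvec (n j)" 0] True
            unfolding s_def by (simp add: inner_commute)
        next
          case False
          hence "s j < 0" using \<open>s j \<noteq> 0\<close> by simp
          hence "x \<bullet> rvec (n j) > 0" using neg by (simp add: mult_less_0_iff)
          thus ?thesis using connected_ivt_hyperplane[OF conn c x, of "rvec (n j)" 0] \<open>s j < 0\<close>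
            unfolding s_def by (simp add: inner_commute)
        qed
        thus False using CU by (auto simp: inner_commute)
      qed
    qed
    have "\<Gamma> \<subseteq> {x. 0 \<le> (s j *\<^sub>R rvec (n j)) \<bullet> x}"
      unfolding C(2) by (rule closure_minimal[OF inC]) (rule closed_halfspace_ge)
    thus "\<forall>x\<in>\<Gamma>. 0 \<le> s j * (x \<bullet> rvec (n j))" by (auto simp: inner_commute)
  qed
  thus ?thesis by blast
qed

lemma openV: "open (\<Inter>j\<in>J. {x::real^'r. x \<bullet> w j \<noteq> 0})" if "finite J"
proof (rule open_INT[OF that], rule ballI)
  fix j
  have "{x::real^'r. x \<bullet> w j \<noteq> 0} = - {x. w j \<bullet> x = 0}" by (auto simp: inner_commute)
  thus "open {x::real^'r. x \<bullet> w j \<noteq> 0}" using closed_hyperplane[of "w j" 0] by (simp add: open_Compl)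
qed

lemma seg_ball:
  fixes p u :: "real^'r"
  assumes "u \<in> ball p e" "0 < t" "t < 1"
  shows "(1 - t) *\<^sub>R p + t *\<^sub>R u \<in> ball p e"
proof -
  have "p - ((1 - t) *\<^sub>R p + t *\<^sub>R u) = t *\<^sub>R (p - u)" by (simp add: algebra_simps)
  hence "dist p ((1 - t) *\<^sub>R p + t *\<^sub>R u) = t * dist p u" using assms by (simp add: dist_norm)
  also have "\<dots> \<le> dist p u" using assms by (simp add: mult_left_le_one_le)
  finally show ?thesis using assms(1) by simp
qed

lemma cover_chamber:
  assumes nz: "\<forall>j. n j \<noteq> 0"
  shows "\<exists>\<Gamma>. chamber n \<Gamma> \<and> (p :: real^'r) \<in> \<Gamma>"
proof -
  let ?U = "UNIV - (\<Union>j. {x. x \<bullet> rvec (n j) = 0})"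
  define V where "V = (\<Inter>j\<in>{j. p \<bullet> rvec (n j) \<noteq> 0}. {x::real^'r. x \<bullet> rvec (n j) \<noteq> 0})"
  have "open V" unfolding V_def by (rule openV) simp
  moreover have "p \<in> V" unfolding V_def by auto
  ultimately obtain e where e: "e > 0" "ball p e \<subseteq> V" using open_contains_ball by blast
  have neg: "negligible (\<Union>j. {x::real^'r. x \<bullet> rvec (n j) = 0})"
  proof (rule negligible_Union)
    show "finite (range (\<lambda>j. {x::real^'r. x \<bullet> rvec (n j) = 0}))" by simp
    fix T assume "T \<in> range (\<lambda>j. {x::real^'r. x \<bullet> rvec (n j) = 0})"
    then obtain j where T: "T = {x. x \<bullet> rvec (n j) = 0}" by auto
    have "T = {x. rvec (n j) \<bullet> x = 0}" unfolding T by (simp add: inner_commute)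
    moreover have "rvec (n j) \<noteq> 0" using rvec_nonzero nz by blast
    ultimately show "negligible T" using negligible_hyperplane[of "rvec (n j)" 0] by simp
  qed
  have "interior (ball p e) \<noteq> {}" using e(1) by simp
  hence "\<not> negligible (ball p e)" using negligible_convex_interior[of "ball p e"] by simp
  hence "\<not> ball p e \<subseteq> (\<Union>j. {x. x \<bullet> rvec (n j) = 0})" using neg negligible_subset by blast
  then obtain u where u: "u \<in> ball p e" "u \<in> ?U" by blast
  show ?thesis
  proof (cases "p = u")
    case True
    then have "p \<in> connected_component_set ?U u" using u by simp
    moreover have "chamber n (closure (connected_component_set ?U u))"
      unfolding chamber_def using componentsI[OF u(2)] by blast
    ultimately show ?thesis using closure_subset by blast
  next
    case False
    have segU: "open_segment p u \<subseteq> ?U"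
    proof
      fix y assume "y \<in> open_segment p u"
      then obtain t where t: "0 < t" "t < 1" "y = (1 - t) *\<^sub>R p + t *\<^sub>R u" unfolding in_segment by auto
      have yb: "y \<in> ball p e" unfolding t(3) by (rule seg_ball[OF u(1) t(1,2)])
      have "y \<bullet> rvec (n j) \<noteq> 0" for j
      proof (cases "p \<bullet> rvec (n j) = 0")
        case True
        have "y \<bullet> rvec (n j) = t * (u \<bullet> rvec (n j))" using True unfolding t(3) by (simp add: inner_add_left)
        moreover have "u \<bullet> rvec (n j) \<noteq> 0" using u(2) by auto
        ultimately show ?thesis using t by simp
      next
        case False
        hence "y \<in> {x. x \<bullet> rvec (n j) \<noteq> 0}" using yb e(2) unfolding V_def by blast
        thus ?thesis by simp
      qed
      thus "y \<in> ?U" by auto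
    qed
    define y where "y = (1 - 1/2) *\<^sub>R p + (1/2::real) *\<^sub>R u"
    have y: "y \<in> open_segment p u" unfolding y_def in_segment using False
      by (intro conjI exI[of _ "1/2::real"]) auto
    have "open_segment p u \<subseteq> connected_component_set ?U y"
      by (rule connected_component_maximal[OF y _ segU]) (simp add: convex_connected)
    hence "closure (open_segment p u) \<subseteq> closure (connected_component_set ?U y)" by (rule closure_mono)
    moreover have "p \<in> closure (open_segment p u)" using False by simp
    moreover have "chamber n (closure (connected_component_set ?U y))"
      unfolding chamber_def using componentsI[of y ?U] segU y by blast
    ultimately show ?thesis by blast
  qed
qed




lemma pairing_smult: "pairing (k *s a) v = k * pairing a v"
  unfolding pairing_def by (simp add: sum_distrib_left mult.assoc)

lemma pairing_sum: "pairing (\<Sum>x\<in>F. f x) v = (\<Sum>x\<in>F. pairing (f x) v)"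
  by (induction F rule: infinite_finite_induct) (simp_all add: pairing_zero pairing_add)

lemma nat_sum_sign:
  assumes "finite F" "(\<forall>x\<in>F. 0 \<le> p x) \<or> (\<forall>x\<in>F. p x \<le> 0)"
  shows "nat (\<Sum>x\<in>F. int (c x) * p x) = (\<Sum>x\<in>F. c x * nat (p x))"
  using assms(2)
proof
  assume h: "\<forall>x\<in>F. 0 \<le> p x"
  have e: "int (c x) * p x = int (c x * nat (p x))" if "x \<in> F" for x using h that by simp
  have "(\<Sum>x\<in>F. int (c x) * p x) = (\<Sum>x\<in>F. int (c x * nat (p x)))" by (rule sum.cong[OF refl e])
  also have "\<dots> = int (\<Sum>x\<in>F. c x * nat (p x))" by (simp add: of_nat_sum)
  finally have "(\<Sum>x\<in>F. int (c x) * p x) = int (\<Sum>x\<in>F. c x * nat (p x))" .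
  thus ?thesis by (simp only: nat_int)
next
  assume h: "\<forall>x\<in>F. p x \<le> 0"
  have "(\<Sum>x\<in>F. int (c x) * p x) \<le> 0" by (rule sum_nonpos) (use h in \<open>auto simp: mult_nonneg_nonpos\<close>)
  moreover have "(\<Sum>x\<in>F. c x * nat (p x)) = 0" by (rule sum.neutral) (use h in auto)
  ultimately show ?thesis by simp
qed

lemma lk_Dplus: "lk (Dplus n m) j = nat (pairing m (n j))"
  unfolding Dplus_def by simp

lemma lk_Dminus: "lk (Dminus n m) j = nat (- pairing m (n j))"
  unfolding Dminus_def by simp

lemma key:
  assumes nz: "\<forall>j. n j \<noteq> 0"
    and XiH: "\<forall>\<Gamma>. chamber n \<Gamma> \<longrightarrow> semigroup_generators (Xi \<Gamma>) \<Gamma>"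
  shows "gg (Dplus n m) (Dminus n m) \<in> ideal_generated
     {mono2 (Dplus n m) (Dminus n m) - mono2 (Dminus n m) (Dplus n m) | m. \<exists>\<Gamma>. chamber n \<Gamma> \<and> m \<in> Xi \<Gamma>}"
    (is "_ \<in> ideal_generated ?G2")
proof -
  obtain \<Gamma> where \<Gamma>: "chamber n \<Gamma>" "rvec m \<in> \<Gamma>" using cover_chamber[OF nz] by blast
  obtain s where s: "\<forall>j. s j \<noteq> 0 \<and> (\<forall>x\<in>\<Gamma>. 0 \<le> s j * (x \<bullet> rvec (n j)))" using sign_chamber[OF \<Gamma>(1)] by blast
  have sg: "semigroup_generators (Xi \<Gamma>) \<Gamma>" using XiH \<Gamma>(1) by blast
  obtain F c where F: "finite F" "F \<subseteq> Xi \<Gamma>" "m = (\<Sum>\<xi>\<in>F. int (c \<xi>) *s \<xi>)"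
    using sg \<Gamma>(2) unfolding semigroup_generators_def by blast
  have FG: "rvec \<xi> \<in> \<Gamma>" if "\<xi> \<in> F" for \<xi> using sg F(2) that unfolding semigroup_generators_def by blast
  have pm: "pairing m (n j) = (\<Sum>\<xi>\<in>F. int (c \<xi>) * pairing \<xi> (n j))" for j
    unfolding F(3) pairing_sum pairing_smult ..
  have sgn: "(\<forall>\<xi>\<in>F. 0 \<le> pairing \<xi> (n j)) \<or> (\<forall>\<xi>\<in>F. pairing \<xi> (n j) \<le> 0)" for j
  proof -
    have h: "0 \<le> s j * real_of_int (pairing \<xi> (n j))" if "\<xi> \<in> F" for \<xi>
      using s FG[OF that] by (metis rvec_inner)
    show ?thesis
    proof (cases "s j > 0")
      case True
      hence "\<forall>\<xi>\<in>F. 0 \<le> pairing \<xi> (n j)" using h by (auto simp: zero_le_mult_iff)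
      thus ?thesis ..
    next
      case False
      hence "s j < 0" using s by (metis linorder_neqE_linordered_idom)
      hence "\<forall>\<xi>\<in>F. pairing \<xi> (n j) \<le> 0" using h by (auto simp: zero_le_mult_iff)
      thus ?thesis ..
    qed
  qed
  have sgn': "(\<forall>\<xi>\<in>F. 0 \<le> - pairing \<xi> (n j)) \<or> (\<forall>\<xi>\<in>F. - pairing \<xi> (n j) \<le> 0)" for j
    using sgn[of j] by auto
  show ?thesis
  proof (rule gg_sum[OF F(1), where P="Dplus n" and Q="Dminus n" and c=c])
    fix \<xi> assume "\<xi> \<in> F"
    hence "gg (Dplus n \<xi>) (Dminus n \<xi>) \<in> ?G2" using \<Gamma>(1) F(2) unfolding gg_def by blast
    thus "gg (Dplus n \<xi>) (Dminus n \<xi>) \<in> ideal_generated ?G2" by (rule ig_gen)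
  next
    show "\<forall>j. lk (Dplus n m) j = (\<Sum>x\<in>F. c x * lk (Dplus n x) j)"
      unfolding lk_Dplus pm using nat_sum_sign[OF F(1) sgn] by simp
  next
    have "\<forall>j. nat (- pairing m (n j)) = (\<Sum>x\<in>F. c x * nat (- pairing x (n j)))"
    proof
      fix j
      have "- pairing m (n j) = (\<Sum>\<xi>\<in>F. int (c \<xi>) * (- pairing \<xi> (n j)))"
        unfolding pm by (simp add: sum_negf)
      thus "nat (- pairing m (n j)) = (\<Sum>x\<in>F. c x * nat (- pairing x (n j)))"
        using nat_sum_sign[OF F(1) sgn'] by simp
    qed
    thus "\<forall>j. lk (Dminus n m) j = (\<Sum>x\<in>F. c x * lk (Dminus n x) j)"
      unfolding lk_Dminus by simp
  qed
qed

lemma deg_DpDm: "deg_class n (Dplus n m) = deg_class n (Dminus n m)"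
  unfolding deg_class_eq lk_Dplus lk_Dminus by (intro exI[of _ m]) auto

lemma G1_sub:
  assumes "deg_class n D = deg_class n E"
  shows "\<exists>G m. D = G + Dplus n m \<and> E = G + Dminus n m"
proof -
  obtain m where m: "\<forall>j. int (lk D j) - int (lk E j) = pairing m (n j)" using assms deg_class_eq by blast
  define G where "G = Abs_poly_mapping (\<lambda>j. min (lk D j) (lk E j))"
  have "D = G + Dplus n m" unfolding G_def
  proof (rule poly_mapping_eqI)
    fix j
    have "nat (pairing m (n j)) = lk D j - lk E j" using m[rule_format, of j] by arith
    thus "lk D j = lk (Abs_poly_mapping (\<lambda>j. min (lk D j) (lk E j)) + Dplus n m) j"
      by (simp add: lookup_add lk_Dplus)
  qed
  moreover have "E = G + Dminus n m" unfolding G_def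
  proof (rule poly_mapping_eqI)
    fix j
    have "nat (- pairing m (n j)) = lk E j - lk D j" using m[rule_format, of j] by arith
    thus "lk E j = lk (Abs_poly_mapping (\<lambda>j. min (lk D j) (lk E j)) + Dminus n m) j"
      by (simp add: lookup_add lk_Dminus)
  qed
  ultimately show ?thesis by blast
qed




theorem mainTheorem2:
  fixes \<Sigma> :: "(real^'r) set set" and n :: "'j::finite \<Rightarrow> int^'r"
  assumes "complete_fan \<Sigma>" and "ray_generators \<Sigma> n"
  shows "{f. phi n f = 0} =
           ideal_generated {mono2 D E - mono2 E D | D E. deg_class n D = deg_class n E}
       \<and> (\<forall>Xi :: (real^'r) set \<Rightarrow> (int^'r) set.
            (\<forall>\<Gamma>. chamber n \<Gamma> \<longrightarrow> semigroup_generators (Xi \<Gamma>) \<Gamma>) \<longrightarrow>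
            {f. phi n f = 0} =
              ideal_generated {mono2 (Dplus n m) (Dminus n m) - mono2 (Dminus n m) (Dplus n m)
                               | m. \<exists>\<Gamma>. chamber n \<Gamma> \<and> m \<in> Xi \<Gamma>})"
proof -
  have nz: "\<forall>j. n j \<noteq> 0" using assms(2) unfolding ray_generators_def primitive_def by blast
  have P1: "{f. phi n f = 0} = ideal_generated (G1 n)" by (rule part1)
  show ?thesis
  proof (intro conjI allI impI)
    show "{f. phi n f = 0} = ideal_generated (G1 n)" by (rule P1)
    fix Xi :: "(real^'r) set \<Rightarrow> (int^'r) set"
    assume XiH: "\<forall>\<Gamma>. chamber n \<Gamma> \<longrightarrow> semigroup_generators (Xi \<Gamma>) \<Gamma>"
    let ?G2 = "{mono2 (Dplus n m) (Dminus n m) - mono2 (Dminus n m) (Dplus n m) | m. \<exists>\<Gamma>. chamber n \<Gamma> \<and> m \<in> Xi \<Gamma>}"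
    have s1: "G1 n \<subseteq> ideal_generated ?G2"
    proof
      fix g assume "g \<in> G1 n"
      then obtain D E where g: "g = gg D E" "deg_class n D = deg_class n E" unfolding gg_def by blast
      obtain G m where GM: "D = G + Dplus n m" "E = G + Dminus n m" using G1_sub[OF g(2)] by blast
      have "gg D E = mono2 G G * gg (Dplus n m) (Dminus n m)"
        unfolding gg_def right_diff_distrib mono2_mult GM ..
      moreover have "gg (Dplus n m) (Dminus n m) \<in> ideal_generated ?G2" by (rule key[OF nz XiH])
      ultimately show "g \<in> ideal_generated ?G2" using g(1) by (simp add: ig_mul)
    qed
    have s2: "?G2 \<subseteq> ideal_generated (G1 n)"
    proof
      fix g assume "g \<in> ?G2"
      then obtain m where "g = mono2 (Dplus n m) (Dminus n m) - mono2 (Dminus n m) (Dplus n m)" by blast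
      hence "g \<in> G1 n" using deg_DpDm[of n m] by blast
      thus "g \<in> ideal_generated (G1 n)" by (rule ig_gen)
    qed
    have "ideal_generated (G1 n) = ideal_generated ?G2"
      using ig_sub[OF s1] ig_sub[OF s2] by blast
    thus "{f. phi n f = 0} = ideal_generated ?G2" using P1 by simp
  qed
qed


end
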